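(* For every integer $n\ge 3$, $\tilde{R}(\dot A_2^{(b)}\sqcup \dot A_2^{(r)},Q_n)=n+2$.
   Context: $A_2$ is the antichain on two vertices; $\dot A_2^{(b)}$ is it colored blue and $\dot A_2^{(r)}$ colored red. The parallel composition $\dot P_1\sqcup\dot P_2$ is the colored poset consisting of disjoint copies of $\dot P_1$ and $\dot P_2$ with every vertex of one incomparable to every vertex of the other; so $\dot A_2^{(b)}\sqcup \dot A_2^{(r)}$ is an antichain of four vertices, two blue and two red. $Q_N$ is the Boolean lattice of all subsets of an $N$-element set ordered by inclusion. In a blue/red coloring of $Q_N$, a copy of a colored poset $\dot P$ is an induced subposet isomorphic to $P$ with matching colors. The poset Erdős–Hajnal number $\tilde{R}(\dot P,Q_n)$ is the minimum $N$ such that every blue/red coloring of $Q_N$ contains a copy of $\dot P$ or a monochromatic induced copy of $Q_n$. *)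

theory Defs
  imports Main
begin

text \<open>Colours: True = blue, False = red.
  A colored poset is a triple (V, le, col): carrier, partial order on V, colouring of V.\<close>

type_synonym 'a cposet = "'a set \<times> ('a \<Rightarrow> 'a \<Rightarrow> bool) \<times> ('a \<Rightarrow> bool)"

definition blue :: bool where "blue = True"
definition red :: bool where "red = False"

definition colored_antichain :: "nat \<Rightarrow> bool \<Rightarrow> nat cposet" where
  "colored_antichain k c = ({..<k}, (\<lambda>x y. x = y), (\<lambda>_. c))"

definition par_comp :: "'a cposet \<Rightarrow> 'b cposet \<Rightarrow> ('a + 'b) cposet" where
  "par_comp P1 P2 =
     (let (V1, le1, c1) = P1; (V2, le2, c2) = P2 in
       (V1 <+> V2,
        (\<lambda>x y. case (x, y) of
              (Inl a, Inl b) \<Rightarrow> le1 a b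
            | (Inr a, Inr b) \<Rightarrow> le2 a b
            | _ \<Rightarrow> False),
        (\<lambda>x. case x of Inl a \<Rightarrow> c1 a | Inr b \<Rightarrow> c2 b)))"

text \<open>Q_N: subsets of {..<N} ordered by inclusion. A blue/red colouring of Q_N is a
  function col :: nat set \<Rightarrow> bool (only its values on Pow {..<N} matter).\<close>
definition has_copy :: "'a cposet \<Rightarrow> nat \<Rightarrow> (nat set \<Rightarrow> bool) \<Rightarrow> bool" where
  "has_copy P N col =
     (let (V, le, c) = P in
       \<exists>f. f ` V \<subseteq> Pow {..<N} \<and> inj_on f V \<and>
           (\<forall>x\<in>V. \<forall>y\<in>V. le x y \<longleftrightarrow> f x \<subseteq> f y) \<and>
           (\<forall>x\<in>V. col (f x) = c x))"

definition has_mono_Q :: "nat \<Rightarrow> nat \<Rightarrow> (nat set \<Rightarrow> bool) \<Rightarrow> bool" where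
  "has_mono_Q n N col =
     (\<exists>f b. f ` Pow {..<n} \<subseteq> Pow {..<N} \<and> inj_on f (Pow {..<n}) \<and>
           (\<forall>X\<in>Pow {..<n}. \<forall>Y\<in>Pow {..<n}. X \<subseteq> Y \<longleftrightarrow> f X \<subseteq> f Y) \<and>
           (\<forall>X\<in>Pow {..<n}. col (f X) = b))"

definition eh_property :: "'a cposet \<Rightarrow> nat \<Rightarrow> nat \<Rightarrow> bool" where
  "eh_property P n N = (\<forall>col. has_copy P N col \<or> has_mono_Q n N col)"

definition poset_EH :: "'a cposet \<Rightarrow> nat \<Rightarrow> nat" where
  "poset_EH P n = (LEAST N. eh_property P n N)"

end

theory Submission
  imports Defs
begin

abbreviation pat where "pat \<equiv> par_comp (colored_antichain 2 blue) (colored_antichain 2 red)"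

definition inc :: "nat set \<Rightarrow> nat set \<Rightarrow> bool" where
  "inc X Y = (\<not> X \<subseteq> Y \<and> \<not> Y \<subseteq> X)"

lemma pat_eq: "pat = ({..<2} <+> {..<2},
   (\<lambda>x y. case (x, y) of (Inl a, Inl b) \<Rightarrow> a = b | (Inr a, Inr b) \<Rightarrow> a = b | _ \<Rightarrow> False),
   (\<lambda>x. case x of Inl a \<Rightarrow> True | Inr b \<Rightarrow> False))"
  by (simp add: par_comp_def colored_antichain_def blue_def red_def)

lemma two: "{..<2::nat} = {0,1}" by auto

lemma has_copy_pat:
  "has_copy pat N col \<longleftrightarrow> (\<exists>x1 x2 y1 y2. x1 \<subseteq> {..<N} \<and> x2 \<subseteq> {..<N} \<and> y1 \<subseteq> {..<N} \<and> y2 \<subseteq> {..<N}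
     \<and> inc x1 x2 \<and> inc y1 y2 \<and> inc x1 y1 \<and> inc x1 y2 \<and> inc x2 y1 \<and> inc x2 y2
     \<and> col x1 \<and> col x2 \<and> \<not> col y1 \<and> \<not> col y2)"
proof
  assume "has_copy pat N col"
  then obtain f where f: "f ` ({..<2::nat} <+> {..<2::nat}) \<subseteq> Pow {..<N}"
    "\<forall>x\<in>{..<2::nat} <+> {..<2::nat}. \<forall>y\<in>{..<2::nat} <+> {..<2::nat}. (case (x, y) of (Inl a, Inl b) \<Rightarrow> a = b | (Inr a, Inr b) \<Rightarrow> a = b | _ \<Rightarrow> False) \<longleftrightarrow> f x \<subseteq> f y"
    "\<forall>x\<in>{..<2::nat} <+> {..<2::nat}. col (f x) = (case x of Inl a \<Rightarrow> True | Inr b \<Rightarrow> False)"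
    unfolding has_copy_def pat_eq by auto
  have m: "Inl 0 \<in> ({..<2::nat} <+> {..<2::nat})" "Inl 1 \<in> ({..<2::nat} <+> {..<2::nat})"
     "Inr 0 \<in> ({..<2::nat} <+> {..<2::nat})" "Inr 1 \<in> ({..<2::nat} <+> {..<2::nat})" by auto
  show "\<exists>x1 x2 y1 y2. x1 \<subseteq> {..<N} \<and> x2 \<subseteq> {..<N} \<and> y1 \<subseteq> {..<N} \<and> y2 \<subseteq> {..<N}
     \<and> inc x1 x2 \<and> inc y1 y2 \<and> inc x1 y1 \<and> inc x1 y2 \<and> inc x2 y1 \<and> inc x2 y2
     \<and> col x1 \<and> col x2 \<and> \<not> col y1 \<and> \<not> col y2"
    apply (rule exI[of _ "f (Inl 0)"], rule exI[of _ "f (Inl 1)"], rule exI[of _ "f (Inr 0)"], rule exI[of _ "f (Inr 1)"])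
    using f(1) f(2)[rule_format, OF m(1) m(2)] f(2)[rule_format, OF m(2) m(1)]
      f(2)[rule_format, OF m(3) m(4)] f(2)[rule_format, OF m(4) m(3)]
      f(2)[rule_format, OF m(1) m(3)] f(2)[rule_format, OF m(3) m(1)]
      f(2)[rule_format, OF m(1) m(4)] f(2)[rule_format, OF m(4) m(1)]
      f(2)[rule_format, OF m(2) m(3)] f(2)[rule_format, OF m(3) m(2)]
      f(2)[rule_format, OF m(2) m(4)] f(2)[rule_format, OF m(4) m(2)]
      f(3)[rule_format, OF m(1)] f(3)[rule_format, OF m(2)] f(3)[rule_format, OF m(3)] f(3)[rule_format, OF m(4)]
      m
    by (auto simp: inc_def)
next
  assume "\<exists>x1 x2 y1 y2. x1 \<subseteq> {..<N} \<and> x2 \<subseteq> {..<N} \<and> y1 \<subseteq> {..<N} \<and> y2 \<subseteq> {..<N}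
     \<and> inc x1 x2 \<and> inc y1 y2 \<and> inc x1 y1 \<and> inc x1 y2 \<and> inc x2 y1 \<and> inc x2 y2
     \<and> col x1 \<and> col x2 \<and> \<not> col y1 \<and> \<not> col y2"
  then obtain x1 x2 y1 y2 where h: "x1 \<subseteq> {..<N}" "x2 \<subseteq> {..<N}" "y1 \<subseteq> {..<N}" "y2 \<subseteq> {..<N}"
     "inc x1 x2" "inc y1 y2" "inc x1 y1" "inc x1 y2" "inc x2 y1" "inc x2 y2"
     "col x1" "col x2" "\<not> col y1" "\<not> col y2" by blast
  define f where "f = case_sum (\<lambda>k::nat. if k = 0 then x1 else x2) (\<lambda>k::nat. if k = 0 then y1 else y2)"
  have V: "({..<2::nat} <+> {..<2::nat}) = {Inl 0, Inl 1, Inr 0, Inr 1}" by (auto simp: two)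
  show "has_copy pat N col"
    unfolding has_copy_def pat_eq Let_def case_prod_conv V
    apply (rule exI[of _ f])
    using h by (auto simp: f_def inc_def inj_on_def)
qed


lemma sub_mono:
  assumes V: "V \<subseteq> {..<N}" "card V = n" and S: "S \<subseteq> {..<N}" "S \<inter> V = {}"
    and c: "\<forall>Y. Y \<subseteq> V \<longrightarrow> col (S \<union> Y) = b"
  shows "has_mono_Q n N col"
proof -
  have fV: "finite V" using V(1) finite_subset by blast
  obtain g where g: "bij_betw g {..<n} V"
    using finite_same_card_bij[of "{..<n}" V] fV V(2) by auto
  have ig: "inj_on g {..<n}" and gi: "g ` {..<n} = V" using g by (auto simp: bij_betw_def)
  define f where "f X = S \<union> g ` X" for X
  have sub: "X \<subseteq> {..<n} \<Longrightarrow> g ` X \<subseteq> V" for X using gi by blast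
  have ord: "X \<subseteq> {..<n} \<Longrightarrow> Y \<subseteq> {..<n} \<Longrightarrow> (X \<subseteq> Y \<longleftrightarrow> f X \<subseteq> f Y)" for X Y
  proof -
    assume X: "X \<subseteq> {..<n}" and Y: "Y \<subseteq> {..<n}"
    have "f X \<subseteq> f Y \<longleftrightarrow> g ` X \<subseteq> g ` Y"
      using sub[OF X] sub[OF Y] S(2) unfolding f_def by blast
    also have "\<dots> \<longleftrightarrow> X \<subseteq> Y"
    proof
      assume "g ` X \<subseteq> g ` Y"
      then show "X \<subseteq> Y" using ig X Y inj_on_image_mem_iff[OF ig] by blast
    qed auto
    finally show ?thesis by simp
  qed
  show ?thesis
    unfolding has_mono_Q_def
  proof (intro exI[of _ f] exI[of _ b] conjI ballI)
    show "f ` Pow {..<n} \<subseteq> Pow {..<N}" using sub S(1) V(1) unfolding f_def by blast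
    show "inj_on f (Pow {..<n})" unfolding inj_on_def proof (intro ballI impI)
      fix X Y assume "X \<in> Pow {..<n}" "Y \<in> Pow {..<n}" "f X = f Y"
      then show "X = Y" using ord[of X Y] ord[of Y X] by auto
    qed
    show "X \<subseteq> Y \<longleftrightarrow> f X \<subseteq> f Y" if "X \<in> Pow {..<n}" "Y \<in> Pow {..<n}" for X Y
      using ord that by blast
    show "col (f X) = b" if "X \<in> Pow {..<n}" for X using c sub that unfolding f_def by blast
  qed
qed

definition col0 :: "nat \<Rightarrow> nat set \<Rightarrow> bool" where
  "col0 N X = (\<not> (X = {} \<or> X = {..<N}))"

lemma low_copy: "\<not> has_copy pat N (col0 N)"
proof
  assume "has_copy pat N (col0 N)"
  then obtain y1 y2 where y: "inc y1 y2" "\<not> col0 N y1" "\<not> col0 N y2" unfolding has_copy_pat by blast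
  then have "y1 \<in> {{}, {..<N}}" "y2 \<in> {{}, {..<N}}" unfolding col0_def by auto
  then show False using y(1) unfolding inc_def by auto
qed

lemma low_mono:
  assumes "N < n + 2" "n \<ge> 2"
  shows "\<not> has_mono_Q n N (col0 N)"
proof
  assume "has_mono_Q n N (col0 N)"
  then obtain f b where f: "f ` Pow {..<n} \<subseteq> Pow {..<N}" "inj_on f (Pow {..<n})"
    "\<forall>X\<in>Pow {..<n}. \<forall>Y\<in>Pow {..<n}. X \<subseteq> Y \<longleftrightarrow> f X \<subseteq> f Y"
    "\<forall>X\<in>Pow {..<n}. col0 N (f X) = b"
    unfolding has_mono_Q_def by (elim exE conjE) (rule that; assumption)
  show False
  proof (cases b)
    case False
    have m: "{} \<in> Pow {..<n}" "{0} \<in> Pow {..<n}" "{1} \<in> Pow {..<n}" using assms by auto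
    have ne: "({}::nat set) \<noteq> {0}" "({}::nat set) \<noteq> {1}" "({0}::nat set) \<noteq> {1}" by auto
    have d: "f {} \<noteq> f {0}" "f {} \<noteq> f {1}" "f {0} \<noteq> f {1}"
      using inj_onD[OF f(2)] m ne by metis+
    have e: "f X = {} \<or> f X = {..<N}" if "X \<in> Pow {..<n}" for X
      using f(4) that False unfolding col0_def by blast
    show False using e[OF m(1)] e[OF m(2)] e[OF m(3)] d by argo
  next
    case True
    have nb: "f X \<noteq> {} \<and> f X \<noteq> {..<N}" if "X \<in> Pow {..<n}" for X
    proof -
      have "col0 N (f X)" using f(4) that True by simp
      then show ?thesis unfolding col0_def by simp
    qed
    have fs: "f X \<subseteq> {..<N}" if "X \<in> Pow {..<n}" for X
      using f(1) that by blast
    have fin: "finite (f X)" if "X \<in> Pow {..<n}" for X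
      using fs[OF that] finite_subset finite_lessThan by metis
    have "k \<le> n \<Longrightarrow> card (f {..<k}) \<ge> k + 1" for k
    proof (induction k)
      case 0
      have "f {} \<noteq> {}" using nb[of "{}"] by simp
      then have "card (f {}) > 0" using fin[of "{}"] by (simp add: card_gt_0_iff)
      then show ?case by simp
    next
      case (Suc k)
      have a: "{..<k} \<in> Pow {..<n}" "{..<Suc k} \<in> Pow {..<n}" using Suc.prems by auto
      have sub: "f {..<k} \<subseteq> f {..<Suc k}" by (rule iffD1[OF f(3)[rule_format, OF a(1) a(2)]]) auto
      have ne: "{..<k} \<noteq> {..<Suc k}" using lessThan_iff[of k k] lessThan_iff[of k "Suc k"] by auto
      have "f {..<k} \<noteq> f {..<Suc k}" using inj_onD[OF f(2) _ a] ne by blast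
      then have "f {..<k} \<subset> f {..<Suc k}" using sub by (rule psubsetI[rotated])
      then have "card (f {..<k}) < card (f {..<Suc k})"
        using psubset_card_mono[OF fin[OF a(2)]] by blast
      moreover have "card (f {..<k}) \<ge> k + 1" using Suc by simp
      ultimately show ?case by simp
    qed
    then have c1: "card (f {..<n}) \<ge> n + 1" by simp
    have a: "{..<n} \<in> Pow {..<n}" by simp
    have "f {..<n} \<subset> {..<N}" using fs[OF a] nb[OF a] by (simp add: psubsetI)
    then have "card (f {..<n}) < card {..<N}" using psubset_card_mono[OF finite_lessThan] by blast
    then have "card (f {..<n}) < N" by simp
    then show False using c1 assms by simp
  qed
qed


definition AA :: "nat \<Rightarrow> nat \<Rightarrow> nat \<Rightarrow> nat set set" where
  "AA N i j = {X. X \<subseteq> {..<N} \<and> i \<in> X \<and> j \<notin> X}"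
definition mid :: "nat \<Rightarrow> nat \<Rightarrow> nat \<Rightarrow> nat set set" where
  "mid N i j = AA N i j - {{i}, {..<N} - {j}}"
definition PP :: "(nat set \<Rightarrow> bool) \<Rightarrow> nat \<Rightarrow> nat \<Rightarrow> nat \<Rightarrow> bool" where
  "PP col N i j = (\<exists>X\<in>AA N i j. \<exists>Y\<in>AA N i j. inc X Y \<and> col X \<noteq> col Y)"

lemma pat_intro: "x1 \<subseteq> {..<N} \<Longrightarrow> x2 \<subseteq> {..<N} \<Longrightarrow> y1 \<subseteq> {..<N} \<Longrightarrow> y2 \<subseteq> {..<N}
     \<Longrightarrow> inc x1 x2 \<Longrightarrow> inc y1 y2 \<Longrightarrow> inc x1 y1 \<Longrightarrow> inc x1 y2 \<Longrightarrow> inc x2 y1 \<Longrightarrow> inc x2 y2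
     \<Longrightarrow> col x1 \<Longrightarrow> col x2 \<Longrightarrow> \<not> col y1 \<Longrightarrow> \<not> col y2 \<Longrightarrow> has_copy pat N col"
  unfolding has_copy_pat by blast

lemma cross: "a \<in> AA N i j \<Longrightarrow> b \<in> AA N j i \<Longrightarrow> inc a b"
  unfolding AA_def inc_def by auto

lemma L1:
  assumes nm: "\<not> has_mono_Q n N col" and N: "N = n + 2" and ij: "i < N" "j < N" "i \<noteq> j"
  shows "\<exists>X\<in>AA N i j. col X \<noteq> c"
proof (rule ccontr)
  assume "\<not> ?thesis"
  then have h: "\<forall>X\<in>AA N i j. col X = c" by blast
  have "card ({..<N} - {i, j}) = n" using ij N by (simp add: card_Diff_subset)
  moreover have "\<forall>Y. Y \<subseteq> {..<N} - {i, j} \<longrightarrow> col ({i} \<union> Y) = c"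
  proof (intro allI impI)
    fix Y assume "Y \<subseteq> {..<N} - {i, j}"
    then have "{i} \<union> Y \<in> AA N i j" using ij unfolding AA_def by auto
    then show "col ({i} \<union> Y) = c" using h by blast
  qed
  ultimately have "has_mono_Q n N col"
    using sub_mono[of "{..<N} - {i, j}" N n "{i}" col c] ij by auto
  then show False using nm by blast
qed

lemma L2:
  assumes nc: "\<not> has_copy pat N col" and ij: "i \<noteq> j"
  shows "\<not> PP col N i j \<or> \<not> PP col N j i"
proof (rule ccontr)
  assume "\<not> ?thesis"
  then obtain X1 Y1 X2 Y2 where a: "X1 \<in> AA N i j" "Y1 \<in> AA N i j" "inc X1 Y1" "col X1 \<noteq> col Y1"
    "X2 \<in> AA N j i" "Y2 \<in> AA N j i" "inc X2 Y2" "col X2 \<noteq> col Y2"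
    unfolding PP_def by blast
  have s: "X1 \<subseteq> {..<N}" "Y1 \<subseteq> {..<N}" "X2 \<subseteq> {..<N}" "Y2 \<subseteq> {..<N}" using a unfolding AA_def by auto
  have c: "inc X1 X2" "inc X1 Y2" "inc Y1 X2" "inc Y1 Y2" using a cross by blast+
  have sym: "inc A B \<Longrightarrow> inc B A" for A B unfolding inc_def by auto
  have ic: "inc X1 X2" "inc X1 Y2" "inc Y1 X2" "inc Y1 Y2" "inc X2 X1" "inc Y2 X1" "inc X2 Y1" "inc Y2 Y1"
     "inc X1 Y1" "inc Y1 X1" "inc X2 Y2" "inc Y2 X2" using c a(3,7) sym by blast+
  have "has_copy pat N col"
  proof (cases "col X1"; cases "col X2")
    assume cc: "col X1" "col X2" show "?thesis" by (rule pat_intro[of X1 N X2 Y1 Y2]) (use a s ic cc in auto)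
  next
    assume cc: "col X1" "\<not> col X2" show "?thesis" by (rule pat_intro[of X1 N Y2 Y1 X2]) (use a s ic cc in auto)
  next
    assume cc: "\<not> col X1" "col X2" show "?thesis" by (rule pat_intro[of Y1 N X2 X1 Y2]) (use a s ic cc in auto)
  next
    assume cc: "\<not> col X1" "\<not> col X2" show "?thesis" by (rule pat_intro[of Y1 N Y2 X1 X2]) (use a s ic cc in auto)
  qed
  then show False using nc by blast
qed

lemma L3a:
  assumes np: "\<not> PP col N i j" and X: "X \<in> mid N i j" and Y: "Y \<in> mid N i j" and XY: "X \<subseteq> Y"
  shows "col X = col Y"
proof -
  have Ys: "Y \<subseteq> {..<N}" "i \<in> Y" "j \<notin> Y" "Y \<noteq> {..<N} - {j}" using Y unfolding mid_def AA_def by auto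
  then obtain e where e: "e < N" "e \<notin> Y" "e \<noteq> j" by blast
  have Xs: "X \<subseteq> {..<N}" "i \<in> X" "j \<notin> X" "X \<noteq> {i}" using X unfolding mid_def AA_def by auto
  have ei: "e \<noteq> i" using e Ys by auto
  have ij: "i \<noteq> j" using Ys by auto
  have Z: "{i, e} \<in> AA N i j" using e Ys ij unfolding AA_def by auto
  have XA: "X \<in> AA N i j" "Y \<in> AA N i j" using X Y unfolding mid_def by auto
  have i1: "inc X {i, e}" using Xs e XY ei unfolding inc_def by auto
  have i2: "inc Y {i, e}" using Xs e XY ei Ys unfolding inc_def by auto
  have "col X = col {i, e}" using np XA Z i1 unfolding PP_def by blast
  moreover have "col Y = col {i, e}" using np XA Z i2 unfolding PP_def by blast
  ultimately show ?thesis by simp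
qed

lemma L3:
  assumes np: "\<not> PP col N i j" and X: "X \<in> mid N i j" and Y: "Y \<in> mid N i j"
  shows "col X = col Y"
proof (cases "inc X Y")
  case True
  then show ?thesis using np X Y unfolding PP_def mid_def by blast
next
  case False
  then have "X \<subseteq> Y \<or> Y \<subseteq> X" unfolding inc_def by blast
  then show ?thesis using L3a[OF np X Y] L3a[OF np Y X] by auto
qed


lemma L4:
  assumes nm: "\<not> has_mono_Q n N col" and N: "N = n + 2" and ij: "i < N" "j < N" "i \<noteq> j"
    and np: "\<not> PP col N i j" and X: "X \<in> mid N i j"
  shows "col {i} \<noteq> col X \<or> col ({..<N} - {j}) \<noteq> col X"
proof -
  obtain W where W: "W \<in> AA N i j" "col W \<noteq> col X" using L1[OF nm N ij, of "col X"] by blast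
  have "W \<notin> mid N i j" using L3[OF np _ X] W(2) by blast
  then have "W = {i} \<or> W = {..<N} - {j}" using W(1) unfolding mid_def by blast
  then show ?thesis using W(2) by blast
qed

lemma card3: "card {a, b, c::nat} \<le> 3"
  by (simp add: card_insert_if)

lemma avoid_ex:
  assumes "finite (A::nat set)" "card A < k"
  shows "\<exists>m<k. m \<notin> A"
proof (rule ccontr)
  assume "\<not> ?thesis"
  then have "{..<k} \<subseteq> A" by auto
  then have "card {..<k} \<le> card A" using assms(1) by (rule card_mono[rotated])
  then show False using assms(2) by simp
qed

lemma card_ins: "finite A \<Longrightarrow> card (insert x A) \<le> Suc (card A)"
  by (simp add: card_insert_if)

lemma card2: "card {a, b::nat} \<le> 2"
  by (simp add: card_insert_if)

lemma card4: "card {a, b, c, d::nat} \<le> 4"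
  using card_ins[of "{b,c,d}" a] card3[of b c d] by simp

lemma mid_small:
  assumes "Z \<subseteq> {..<N}" "i \<in> Z" "j \<notin> Z" "Z \<noteq> {i}" "card Z \<le> 3" "N \<ge> 5" "j < N"
  shows "Z \<in> mid N i j"
proof -
  have "card ({..<N} - {j}) = N - 1" using assms by simp
  then have "Z \<noteq> {..<N} - {j}" using assms by auto
  then show ?thesis using assms unfolding mid_def AA_def by blast
qed

lemma L5:
  assumes N5: "N \<ge> 5" and np1: "\<not> PP col N i j" and np2: "\<not> PP col N k l"
    and a: "i < N" "j < N" "k < N" "l < N" "i \<noteq> j" "k \<noteq> l" "i \<noteq> l" "k \<noteq> j"
    and X: "X \<in> mid N i j" and Y: "Y \<in> mid N k l"
  shows "col X = col Y"
proof -
  obtain m where m: "m < 5" "m \<noteq> i" "m \<noteq> j" "m \<noteq> k" "m \<noteq> l"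
  proof -
    obtain m where "m < 5" "m \<notin> {i, j, k, l}" using avoid_ex[of "{i,j,k,l}" 5] card4[of i j k l] by auto
    then show ?thesis using that by blast
  qed
  have mN: "m < N" using m N5 by simp
  have Z1: "{i, k, m} \<in> mid N i j"
    by (rule mid_small) (use a m mN card3 N5 in auto)
  have Z2: "{i, k, m} \<in> mid N k l"
    by (rule mid_small) (use a m mN card3 N5 in auto)
  show ?thesis using L3[OF np1 X Z1] L3[OF np2 Y Z2] by simp
qed

lemma L6:
  assumes N5: "N \<ge> 5" and nc: "\<not> has_copy pat N col" and np1: "\<not> PP col N i j" and np2: "\<not> PP col N k l"
    and a: "i < N" "j < N" "k < N" "l < N" "i \<noteq> j" "k \<noteq> l"
    and X: "X \<in> mid N i j" and Y: "Y \<in> mid N k l"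
  shows "col X = col Y"
proof (cases "i \<noteq> l \<and> k \<noteq> j")
  case True
  then show ?thesis using L5[OF N5 np1 np2 a] X Y by blast
next
  case False
  then have il: "i = l \<or> k = j" by blast
  obtain p q where pq: "p < 5" "q < 5" "p \<noteq> q" "p \<noteq> i" "p \<noteq> j" "p \<noteq> k" "p \<noteq> l"
     "q \<noteq> i" "q \<noteq> j" "q \<noteq> k" "q \<noteq> l"
  proof -
    have c: "card {i, j, k, l} \<le> 3"
    proof (cases "i = l")
      case True
      then have "{i, j, k, l} = {i, j, k}" by auto
      then show ?thesis using card3[of i j k] by simp
    next
      case False
      then have "k = j" using il by blast
      then have "{i, j, k, l} = {i, j, l}" by auto
      then show ?thesis using card3[of i j l] by simp
    qed
    obtain p where p: "p < 5" "p \<notin> {i, j, k, l}" using avoid_ex[of "{i,j,k,l}" 5] c by auto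
    have "card (insert p {i, j, k, l}) \<le> 4" using c card_ins[of "{i,j,k,l}" p] by simp
    then obtain q where q: "q < 5" "q \<notin> insert p {i, j, k, l}" using avoid_ex[of "insert p {i,j,k,l}" 5] by auto
    show ?thesis using that[of p q] p q by auto
  qed
  have pN: "p < N" "q < N" using pq N5 by auto
  have gen: "col X = col Y" if np3: "\<not> PP col N p' q'" and p'q': "p' < N" "q' < N" "p' \<noteq> q'"
     "p' \<noteq> i" "p' \<noteq> j" "p' \<noteq> k" "p' \<noteq> l" "q' \<noteq> i" "q' \<noteq> j" "q' \<noteq> k" "q' \<noteq> l" for p' q'
  proof -
    have Z: "{p', i} \<in> mid N p' q'"
      by (rule mid_small) (use p'q' a card3[of p' i i] N5 in auto)
    have "col X = col {p', i}" using L5[OF N5 np1 np3] a p'q' X Z by blast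
    moreover have "col {p', i} = col Y" using L5[OF N5 np3 np2] a p'q' Y Z by blast
    ultimately show ?thesis by simp
  qed
  have "\<not> PP col N p q \<or> \<not> PP col N q p" using L2[OF nc pq(3)] .
  then show ?thesis
  proof
    assume "\<not> PP col N p q" then show ?thesis using gen[of p q] pq pN by blast
  next
    assume "\<not> PP col N q p" then show ?thesis using gen[of q p] pq pN by blast
  qed
qed


lemma tour_heads:
  assumes "u \<noteq> v" "v \<noteq> w" "u \<noteq> w" "R u v \<or> R v u" "R v w \<or> R w v" "R u w \<or> R w u"
  shows "\<exists>x1 y1 x2 y2. R x1 y1 \<and> R x2 y2 \<and> x1 \<in> {u,v,w} \<and> y1 \<in> {u,v,w} \<and> x2 \<in> {u,v,w} \<and> y2 \<in> {u,v,w}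
     \<and> x1 \<noteq> y1 \<and> x2 \<noteq> y2 \<and> y1 \<noteq> y2"
  using assms by blast

lemma tour_tails:
  assumes "u \<noteq> v" "v \<noteq> w" "u \<noteq> w" "R u v \<or> R v u" "R v w \<or> R w v" "R u w \<or> R w u"
  shows "\<exists>x1 y1 x2 y2. R x1 y1 \<and> R x2 y2 \<and> x1 \<in> {u,v,w} \<and> y1 \<in> {u,v,w} \<and> x2 \<in> {u,v,w} \<and> y2 \<in> {u,v,w}
     \<and> x1 \<noteq> y1 \<and> x2 \<noteq> y2 \<and> x1 \<noteq> x2"
  using assms by blast

lemma pat_intro_c: "x1 \<subseteq> {..<N} \<Longrightarrow> x2 \<subseteq> {..<N} \<Longrightarrow> y1 \<subseteq> {..<N} \<Longrightarrow> y2 \<subseteq> {..<N}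
     \<Longrightarrow> inc x1 x2 \<Longrightarrow> inc y1 y2 \<Longrightarrow> inc x1 y1 \<Longrightarrow> inc x1 y2 \<Longrightarrow> inc x2 y1 \<Longrightarrow> inc x2 y2
     \<Longrightarrow> col x1 = c \<Longrightarrow> col x2 = c \<Longrightarrow> col y1 \<noteq> c \<Longrightarrow> col y2 \<noteq> c \<Longrightarrow> has_copy pat N col"
proof (cases c)
  case True
  assume "x1 \<subseteq> {..<N}" "x2 \<subseteq> {..<N}" "y1 \<subseteq> {..<N}" "y2 \<subseteq> {..<N}"
     "inc x1 x2" "inc y1 y2" "inc x1 y1" "inc x1 y2" "inc x2 y1" "inc x2 y2"
     "col x1 = c" "col x2 = c" "col y1 \<noteq> c" "col y2 \<noteq> c"
  then show ?thesis using True pat_intro[of x1 N x2 y1 y2 col] by blast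
next
  case False
  assume h: "x1 \<subseteq> {..<N}" "x2 \<subseteq> {..<N}" "y1 \<subseteq> {..<N}" "y2 \<subseteq> {..<N}"
     "inc x1 x2" "inc y1 y2" "inc x1 y1" "inc x1 y2" "inc x2 y1" "inc x2 y2"
     "col x1 = c" "col x2 = c" "col y1 \<noteq> c" "col y2 \<noteq> c"
  have s: "inc y1 x1" "inc y1 x2" "inc y2 x1" "inc y2 x2" using h unfolding inc_def by auto
  show ?thesis using h s False pat_intro[of y1 N y2 x1 x2 col] by blast
qed


lemma L8:
  assumes N5: "N \<ge> 5" and nc: "\<not> has_copy pat N col"
    and G0: "\<forall>i j X. i < N \<longrightarrow> j < N \<longrightarrow> i \<noteq> j \<longrightarrow> \<not> PP col N i j \<longrightarrow> X \<in> mid N i j \<longrightarrow> col X = c"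
    and ii: "i < N" "i' < N" "i \<noteq> i'" "col {i} \<noteq> c" "col {i'} \<noteq> c"
  shows False
proof -
  have G: "col X = c" if "i < N" "j < N" "i \<noteq> j" "\<not> PP col N i j" "X \<in> mid N i j" for i j X
    using G0 that by blast
  obtain u v w where uvw: "u < 5" "v < 5" "w < 5" "u \<noteq> v" "v \<noteq> w" "u \<noteq> w"
    "u \<noteq> i" "v \<noteq> i" "w \<noteq> i" "u \<noteq> i'" "v \<noteq> i'" "w \<noteq> i'"
  proof -
    obtain u where u: "u < 5" "u \<notin> {i, i'}" using avoid_ex[of "{i,i'}" 5] card2[of i i'] by auto
    obtain v where v: "v < 5" "v \<notin> {i, i', u}" using avoid_ex[of "{i,i',u}" 5] card3[of i i' u] by auto
    obtain w where w: "w < 5" "w \<notin> {i, i', u, v}" using avoid_ex[of "{i,i',u,v}" 5] card4[of i i' u v] by auto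
    show ?thesis using that[of u v w] u v w by auto
  qed
  have uN: "u < N" "v < N" "w < N" using uvw N5 by auto
  let ?R = "\<lambda>x y. \<not> PP col N x y"
  have "?R u v \<or> ?R v u" "?R v w \<or> ?R w v" "?R u w \<or> ?R w u" using L2[OF nc] uvw by blast+
  then obtain x1 y1 x2 y2 where t: "?R x1 y1" "?R x2 y2" "x1 \<in> {u,v,w}" "y1 \<in> {u,v,w}" "x2 \<in> {u,v,w}" "y2 \<in> {u,v,w}"
     "x1 \<noteq> y1" "x2 \<noteq> y2" "y1 \<noteq> y2"
    using tour_heads[of u v w ?R] uvw by blast
  define Z1 where "Z1 = {u,v,w} - {y1}"
  define Z2 where "Z2 = {u,v,w} - {y2}"
  have cZ: "card Z1 \<le> 3" "card Z2 \<le> 3"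
  proof -
    have "card Z1 \<le> card {u,v,w}" unfolding Z1_def by (rule card_mono) auto
    then show "card Z1 \<le> 3" using card3[of u v w] by linarith
    have "card Z2 \<le> card {u,v,w}" unfolding Z2_def by (rule card_mono) auto
    then show "card Z2 \<le> 3" using card3[of u v w] by linarith
  qed
  have sZ: "Z1 \<subseteq> {..<N}" "Z2 \<subseteq> {..<N}" using uN unfolding Z1_def Z2_def by auto
  have xin: "x1 \<in> Z1" "x2 \<in> Z2" "y1 \<notin> Z1" "y2 \<notin> Z2" "y2 \<in> Z1" "y1 \<in> Z2"
    using t unfolding Z1_def Z2_def by auto
  have iZ: "i \<notin> Z1" "i \<notin> Z2" "i' \<notin> Z1" "i' \<notin> Z2" "x1 \<noteq> i" "x2 \<noteq> i" "x1 \<noteq> i'" "x2 \<noteq> i'"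
    using t uvw unfolding Z1_def Z2_def by auto
  have third: "\<exists>z\<in>{u,v,w}. z \<noteq> x \<and> z \<noteq> y" if "x \<in> {u,v,w}" "y \<in> {u,v,w}" for x y
    using that uvw by auto
  have n1: "Z1 \<noteq> {x1}"
  proof -
    obtain z where "z \<in> {u,v,w}" "z \<noteq> x1" "z \<noteq> y1" using third[OF t(3) t(4)] by blast
    then have "z \<in> Z1" unfolding Z1_def by blast
    then show ?thesis using \<open>z \<noteq> x1\<close> by blast
  qed
  have n2: "Z2 \<noteq> {x2}"
  proof -
    obtain z where "z \<in> {u,v,w}" "z \<noteq> x2" "z \<noteq> y2" using third[OF t(5) t(6)] by blast
    then have "z \<in> Z2" unfolding Z2_def by blast
    then show ?thesis using \<open>z \<noteq> x2\<close> by blast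
  qed
  have yN: "y1 < N" "y2 < N" "x1 < N" "x2 < N" using t uN by auto
  have m1: "Z1 \<in> mid N x1 y1" using mid_small[OF sZ(1) xin(1) xin(3) n1 cZ(1) N5 yN(1)] .
  have m2: "Z2 \<in> mid N x2 y2" using mid_small[OF sZ(2) xin(2) xin(4) n2 cZ(2) N5 yN(2)] .
  have c1: "col Z1 = c" using G[OF yN(3) yN(1) t(7) t(1) m1] .
  have c2: "col Z2 = c" using G[OF yN(4) yN(2) t(8) t(2) m2] .
  have inc: "inc Z1 Z2" "inc {i} {i'}" "inc Z1 {i}" "inc Z1 {i'}" "inc Z2 {i}" "inc Z2 {i'}"
    unfolding inc_def using xin iZ ii(3) by blast+
  have "has_copy pat N col"
    using pat_intro_c[OF sZ(1) sZ(2) _ _ inc, of col c] c1 c2 ii by auto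
  then show False using nc by blast
qed


lemma L9:
  assumes N5: "N \<ge> 5" and nc: "\<not> has_copy pat N col"
    and G0: "\<forall>i j X. i < N \<longrightarrow> j < N \<longrightarrow> i \<noteq> j \<longrightarrow> \<not> PP col N i j \<longrightarrow> X \<in> mid N i j \<longrightarrow> col X = c"
    and ii: "i < N" "i' < N" "i \<noteq> i'" "col ({..<N} - {i}) \<noteq> c" "col ({..<N} - {i'}) \<noteq> c"
  shows False
proof -
  have G: "col X = c" if "i < N" "j < N" "i \<noteq> j" "\<not> PP col N i j" "X \<in> mid N i j" for i j X
    using G0 that by blast
  obtain u v w where uvw: "u < 5" "v < 5" "w < 5" "u \<noteq> v" "v \<noteq> w" "u \<noteq> w"
    "u \<noteq> i" "v \<noteq> i" "w \<noteq> i" "u \<noteq> i'" "v \<noteq> i'" "w \<noteq> i'"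
  proof -
    obtain u where u: "u < 5" "u \<notin> {i, i'}" using avoid_ex[of "{i,i'}" 5] card2[of i i'] by auto
    obtain v where v: "v < 5" "v \<notin> {i, i', u}" using avoid_ex[of "{i,i',u}" 5] card3[of i i' u] by auto
    obtain w where w: "w < 5" "w \<notin> {i, i', u, v}" using avoid_ex[of "{i,i',u,v}" 5] card4[of i i' u v] by auto
    show ?thesis using that[of u v w] u v w by auto
  qed
  have uN: "u < N" "v < N" "w < N" using uvw N5 by auto
  let ?R = "\<lambda>x y. \<not> PP col N x y"
  have "?R u v \<or> ?R v u" "?R v w \<or> ?R w v" "?R u w \<or> ?R w u" using L2[OF nc] uvw by blast+
  then obtain x1 y1 x2 y2 where t: "?R x1 y1" "?R x2 y2" "x1 \<in> {u,v,w}" "y1 \<in> {u,v,w}" "x2 \<in> {u,v,w}" "y2 \<in> {u,v,w}"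
     "x1 \<noteq> y1" "x2 \<noteq> y2" "x1 \<noteq> x2"
    using tour_tails[of u v w ?R] uvw by blast
  define Z1 where "Z1 = {..<N} - ({u,v,w} - {x1})"
  define Z2 where "Z2 = {..<N} - ({u,v,w} - {x2})"
  have yN: "y1 < N" "y2 < N" "x1 < N" "x2 < N" using t uN by auto
  have sZ: "Z1 \<subseteq> {..<N}" "Z2 \<subseteq> {..<N}" unfolding Z1_def Z2_def by auto
  have xin: "x1 \<in> Z1" "x2 \<in> Z2" "y1 \<notin> Z1" "y2 \<notin> Z2" "x1 \<notin> Z2" "x2 \<notin> Z1"
    using t yN unfolding Z1_def Z2_def by auto
  have iZ: "i \<in> Z1" "i \<in> Z2" "i' \<in> Z1" "i' \<in> Z2" "x1 \<noteq> i" "x2 \<noteq> i" "y1 \<noteq> i" "y2 \<noteq> i" "y1 \<noteq> i'" "y2 \<noteq> i'"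
    using t uvw ii unfolding Z1_def Z2_def by auto
  have third: "\<exists>z\<in>{u,v,w}. z \<noteq> x \<and> z \<noteq> y" if "x \<in> {u,v,w}" "y \<in> {u,v,w}" for x y
    using that uvw by auto
  have n1: "Z1 \<noteq> {..<N} - {y1}"
  proof -
    obtain z where z: "z \<in> {u,v,w}" "z \<noteq> x1" "z \<noteq> y1" using third[OF t(3) t(4)] by blast
    then have "z \<notin> Z1" unfolding Z1_def by blast
    moreover have "z \<in> {..<N} - {y1}" using z uN by auto
    ultimately show ?thesis by blast
  qed
  have n2: "Z2 \<noteq> {..<N} - {y2}"
  proof -
    obtain z where z: "z \<in> {u,v,w}" "z \<noteq> x2" "z \<noteq> y2" using third[OF t(5) t(6)] by blast
    then have "z \<notin> Z2" unfolding Z2_def by blast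
    moreover have "z \<in> {..<N} - {y2}" using z uN by auto
    ultimately show ?thesis by blast
  qed
  have n1': "Z1 \<noteq> {x1}" using iZ(1) iZ(5) by blast
  have n2': "Z2 \<noteq> {x2}" using iZ(2) iZ(6) by blast
  have m1: "Z1 \<in> mid N x1 y1" using sZ(1) xin(1) xin(3) n1 n1' unfolding mid_def AA_def by blast
  have m2: "Z2 \<in> mid N x2 y2" using sZ(2) xin(2) xin(4) n2 n2' unfolding mid_def AA_def by blast
  have c1: "col Z1 = c" using G[OF yN(3) yN(1) t(7) t(1) m1] .
  have c2: "col Z2 = c" using G[OF yN(4) yN(2) t(8) t(2) m2] .
  have yy: "y1 \<in> {..<N} - {i}" "y2 \<in> {..<N} - {i}" "y1 \<in> {..<N} - {i'}" "y2 \<in> {..<N} - {i'}"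
    using yN iZ by auto
  have ii2: "i' \<in> {..<N} - {i}" "i \<in> {..<N} - {i'}" "i \<notin> {..<N} - {i}" "i' \<notin> {..<N} - {i'}" using ii by auto
  have inc: "inc Z1 Z2" "inc ({..<N} - {i}) ({..<N} - {i'})" "inc Z1 ({..<N} - {i})" "inc Z1 ({..<N} - {i'})"
     "inc Z2 ({..<N} - {i})" "inc Z2 ({..<N} - {i'})"
    unfolding inc_def using xin iZ yy ii2 by blast+
  have "has_copy pat N col"
    using pat_intro_c[OF sZ(1) sZ(2) _ _ inc, of col c] c1 c2 ii by auto
  then show False using nc by blast
qed

lemma upper:
  assumes n3: "n \<ge> 3" and N: "N = n + 2"
  shows "has_copy pat N col \<or> has_mono_Q n N col"
proof (rule ccontr)
  assume "\<not> ?thesis"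
  then have nc: "\<not> has_copy pat N col" and nm: "\<not> has_mono_Q n N col" by auto
  have N5: "N \<ge> 5" using n3 N by simp
  have N2: "0 < N" "1 < N" "2 < N" using N5 by auto
  obtain a b Z where ab: "a < N" "b < N" "a \<noteq> b" "\<not> PP col N a b" "Z \<in> mid N a b"
  proof -
    have "\<not> PP col N 0 1 \<or> \<not> PP col N 1 0" using L2[OF nc] by simp
    then show ?thesis
    proof
      assume h: "\<not> PP col N 0 1"
      have "{0, 2} \<in> mid N 0 1" by (rule mid_small) (use N5 card3[of 0 2 2] in auto)
      then show ?thesis using that[OF N2(1) N2(2) _ h] by simp
    next
      assume h: "\<not> PP col N 1 0"
      have "{1, 2} \<in> mid N 1 0" by (rule mid_small) (use N5 card3[of 1 2 2] in auto)
      then show ?thesis using that[OF N2(2) N2(1) _ h] by simp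
    qed
  qed
  define c where "c = col Z"
  have G: "col X = c" if "i < N" "j < N" "i \<noteq> j" "\<not> PP col N i j" "X \<in> mid N i j" for i j X
    using L6[OF N5 nc that(4) ab(4) that(1,2) ab(1,2) that(3) ab(3) that(5) ab(5)] unfolding c_def .
  have Gall: "\<forall>i j X. i < N \<longrightarrow> j < N \<longrightarrow> i \<noteq> j \<longrightarrow> \<not> PP col N i j \<longrightarrow> X \<in> mid N i j \<longrightarrow> col X = c"
    using G by blast
  have L7: "col {i} \<noteq> c \<or> col ({..<N} - {j}) \<noteq> c" if h: "i < N" "j < N" "i \<noteq> j" "\<not> PP col N i j" for i j
  proof -
    obtain r where r: "r < 5" "r \<noteq> i" "r \<noteq> j"
    proof -
      obtain r where "r < 5" "r \<notin> {i, j}" using avoid_ex[of "{i,j}" 5] card2[of i j] by auto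
      then show ?thesis using that by blast
    qed
    have "{i, r} \<in> mid N i j" by (rule mid_small) (use h r N5 card3[of i r r] in auto)
    then show ?thesis using L4[OF nm N h(1-3) h(4)] G[OF h] by metis
  qed
  obtain s where s: "\<And>i. i < N \<Longrightarrow> col {i} \<noteq> c \<Longrightarrow> i = s"
  proof (cases "\<exists>i<N. col {i} \<noteq> c")
    case True
    then obtain s where "s < N" "col {s} \<noteq> c" by blast
    then show ?thesis using that L8[OF N5 nc Gall] by metis
  next
    case False
    then show ?thesis using that by blast
  qed
  obtain t where t: "\<And>i. i < N \<Longrightarrow> col ({..<N} - {i}) \<noteq> c \<Longrightarrow> i = t"
  proof (cases "\<exists>i<N. col ({..<N} - {i}) \<noteq> c")
    case True
    then obtain s where "s < N" "col ({..<N} - {s}) \<noteq> c" by blast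
    then show ?thesis using that L9[OF N5 nc Gall] by metis
  next
    case False
    then show ?thesis using that by blast
  qed
  obtain p q where pq: "p < 5" "q < 5" "p \<noteq> q" "p \<noteq> s" "p \<noteq> t" "q \<noteq> s" "q \<noteq> t"
  proof -
    obtain p where p: "p < 5" "p \<notin> {s, t}" using avoid_ex[of "{s,t}" 5] card2[of s t] by auto
    obtain q where q: "q < 5" "q \<notin> {s, t, p}" using avoid_ex[of "{s,t,p}" 5] card3[of s t p] by auto
    show ?thesis using that[of p q] p q by auto
  qed
  have pN: "p < N" "q < N" using pq N5 by auto
  have "\<not> PP col N p q \<or> \<not> PP col N q p" using L2[OF nc pq(3)] .
  then show False
  proof
    assume "\<not> PP col N p q"
    then have "col {p} \<noteq> c \<or> col ({..<N} - {q}) \<noteq> c" using L7 pN pq by blast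
    then show False using s t pN pq by blast
  next
    assume "\<not> PP col N q p"
    then have "col {q} \<noteq> c \<or> col ({..<N} - {p}) \<noteq> c" using L7 pN pq by metis
    then show False using s t pN pq by blast
  qed
qed

theorem lemma12:
  fixes n :: nat
  assumes "n \<ge> 3"
  shows "eh_property (par_comp (colored_antichain 2 blue) (colored_antichain 2 red)) n (n + 2)
       \<and> poset_EH (par_comp (colored_antichain 2 blue) (colored_antichain 2 red)) n = n + 2"
proof -
  have up: "eh_property pat n (n + 2)"
    unfolding eh_property_def using upper[OF assms refl] by blast
  have low: "\<not> eh_property pat n N" if "N < n + 2" for N
  proof
    assume "eh_property pat n N"
    then have "has_copy pat N (col0 N) \<or> has_mono_Q n N (col0 N)" unfolding eh_property_def by blast
    then show False using low_copy low_mono[OF that] assms by auto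
  qed
  have "poset_EH pat n = n + 2"
    unfolding poset_EH_def
  proof (rule Least_equality)
    show "eh_property pat n (n + 2)" by (rule up)
    show "n + 2 \<le> y" if "eh_property pat n y" for y using low that by (meson not_le)
  qed
  then show ?thesis using up by simp
qed

end
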